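(* Let $M$ be a manifold of dimension $m$, and let $X_p$ and $X_s$ be two commuting vector fields on $M$ possessing $m-2$ independent common integrals of motion $H_1,\dots,H_{m-2}$. Let $h(x)=E\,x^2+F\,x+G$ be a quadratic polynomial in $x$ whose coefficients $E,F,G$ are functions on $M$ satisfying the Kowalewski separability conditions \[ E F_s - F E_s = E G_p - G E_p, \qquad E G_s - G E_s = F G_p - G F_p , \] where $E_p=X_p(E)$, $E_s=X_s(E)$, and similarly for $F$ and $G$. Then the roots $x_1,x_2$ of the equation $E x^2+F x+G=0$ are separating coordinates for $X_p$ and $X_s$.
   Context: "Separating coordinates" is meant in the following sense: in the coordinate system $(x_1,x_2,H_1,\dots,H_{m-2})$ (adapted to the two-dimensional foliation spanned by $X_p,X_s$), there exist functions $\psi_1,\psi_2$ such that \[ X_s + x_1 X_p = \psi_1\,\frac{\partial}{\partial x_1},\qquad X_s + x_2 X_p = \psi_2\,\frac{\partial}{\partial x_2}, \] with $\psi_1$ independent of $x_2$ and $\psi_2$ independent of $x_1$ (i.e. $\psi_1=\psi_1(x_1,H_1,\dots,H_{m-2})$, $\psi_2=\psi_2(x_2,H_1,\dots,H_{m-2})$). *)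

theory Defs
  imports "HOL-Analysis.Analysis"
begin

text \<open>Local model: the manifold M of dimension m is represented (locally) by an open
set U in a Euclidean space of dimension m = DIM('a).\<close>

fun Ck_on :: "nat \<Rightarrow> 'a::euclidean_space set \<Rightarrow> ('a \<Rightarrow> 'b::real_normed_vector) \<Rightarrow> bool" where
  "Ck_on 0 U f = continuous_on U f"
| "Ck_on (Suc k) U f =
     ((\<forall>x\<in>U. f differentiable (at x)) \<and>
      (\<forall>v. Ck_on k U (\<lambda>x. frechet_derivative f (at x) v)))"

definition smooth_on :: "'a::euclidean_space set \<Rightarrow> ('a \<Rightarrow> 'b::real_normed_vector) \<Rightarrow> bool" where
  "smooth_on U f \<longleftrightarrow> (\<forall>k. Ck_on k U f)"

definition vf_apply :: "('a::euclidean_space \<Rightarrow> 'a) \<Rightarrow> ('a \<Rightarrow> real) \<Rightarrow> 'a \<Rightarrow> real" where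
  "vf_apply X f q = frechet_derivative f (at q) (X q)"

definition commuting_on :: "'a::euclidean_space set \<Rightarrow> ('a \<Rightarrow> 'a) \<Rightarrow> ('a \<Rightarrow> 'a) \<Rightarrow> bool" where
  "commuting_on U X Y \<longleftrightarrow>
     (\<forall>q\<in>U. frechet_derivative Y (at q) (X q) - frechet_derivative X (at q) (Y q) = 0)"

definition indep_differentials :: "(nat \<Rightarrow> 'a::euclidean_space \<Rightarrow> real) \<Rightarrow> nat \<Rightarrow> 'a \<Rightarrow> bool" where
  "indep_differentials f n q \<longleftrightarrow>
     (\<forall>c::nat \<Rightarrow> real. (\<forall>v. (\<Sum>j<n. c j * frechet_derivative (f j) (at q) v) = 0)
        \<longrightarrow> (\<forall>j<n. c j = 0))"

text \<open>The coordinate system (x1, x2, H_1, ..., H_{m-2}) as an indexed family of functions: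
  index 0 is x1, index 1 is x2, index k+2 is H k.\<close>
definition coords :: "('a \<Rightarrow> real) \<Rightarrow> ('a \<Rightarrow> real) \<Rightarrow> (nat \<Rightarrow> 'a \<Rightarrow> real) \<Rightarrow> nat \<Rightarrow> 'a \<Rightarrow> real" where
  "coords x1 x2 H j = (if j = 0 then x1 else if j = 1 then x2 else H (j - 2))"

definition coord_vec :: "(nat \<Rightarrow> 'a::euclidean_space \<Rightarrow> real) \<Rightarrow> nat \<Rightarrow> nat \<Rightarrow> 'a \<Rightarrow> 'a" where
  "coord_vec y n i q =
     (THE v. \<forall>j<n. frechet_derivative (y j) (at q) v = (if j = i then 1 else 0))"

end

theory Submission
  imports Defs
begin

abbreviation Df :: "('a::real_normed_vector \<Rightarrow> 'b::real_normed_vector) \<Rightarrow> 'a \<Rightarrow> 'a \<Rightarrow> 'b" where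
  "Df f x \<equiv> frechet_derivative f (at x)"

lemma line_deriv:
  fixes f :: "'a::real_normed_vector \<Rightarrow> real"
  assumes "f differentiable (at x)" "x = a + s *\<^sub>R u"
  shows "((\<lambda>t. f (a + t *\<^sub>R u)) has_derivative (\<lambda>d. d * Df f x u)) (at s within S)"
proof -
  have d: "(f has_derivative Df f (a + s *\<^sub>R u)) (at (a + s *\<^sub>R u))"
    using assms frechet_derivative_works by blast
  have l: "linear (Df f (a + s *\<^sub>R u))" using assms linear_frechet_derivative by blast
  have "((\<lambda>t. a + t *\<^sub>R u) has_derivative (\<lambda>d. d *\<^sub>R u)) (at s within S)"
    by (auto intro!: derivative_eq_intros)
  from has_derivative_in_compose[OF this d[THEN has_derivative_at_withinI]]
  have "((\<lambda>t. f (a + t *\<^sub>R u)) has_derivative (\<lambda>d. Df f (a + s *\<^sub>R u) (d *\<^sub>R u))) (at s within S)"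
    by (simp add: o_def)
  then show ?thesis using l assms(2) by (simp add: linear_scale)
qed

lemma mixed_mvt:
  fixes f :: "'a::real_normed_vector \<Rightarrow> real"
  assumes box: "\<forall>s\<in>{0..h}. \<forall>t\<in>{0..h}. q + s *\<^sub>R u + t *\<^sub>R v \<in> U"
    and fd: "\<forall>x\<in>U. f differentiable (at x)"
    and gd: "\<forall>x\<in>U. (\<lambda>x. Df f x u) differentiable (at x)"
    and h: "h > 0"
  shows "\<exists>s\<in>{0..h}. \<exists>t\<in>{0..h}. f (q + h *\<^sub>R u + h *\<^sub>R v) - f (q + h *\<^sub>R u) - f (q + h *\<^sub>R v) + f q
           = h^2 * Df (\<lambda>x. Df f x u) (q + s *\<^sub>R u + t *\<^sub>R v) v"
proof -
  define \<phi> where "\<phi> s = f ((q + h *\<^sub>R v) + s *\<^sub>R u) - f (q + s *\<^sub>R u)" for s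
  have "\<exists>s\<in>{0<..<h}. \<phi> h - \<phi> 0 = (\<lambda>d. d * Df f (q + s *\<^sub>R u + h *\<^sub>R v) u - d * Df f (q + s *\<^sub>R u + 0 *\<^sub>R v) u) (h - 0)"
  proof (rule mvt_simple[OF h])
    fix s assume s: "0 \<le> s" "s \<le> h"
    have m1: "q + s *\<^sub>R u + h *\<^sub>R v \<in> U" using box s h by auto
    have m2: "q + s *\<^sub>R u + 0 *\<^sub>R v \<in> U" using box s h by (metis atLeastAtMost_iff order_refl less_imp_le)
    show "(\<phi> has_derivative (\<lambda>d. d * Df f (q + s *\<^sub>R u + h *\<^sub>R v) u - d * Df f (q + s *\<^sub>R u + 0 *\<^sub>R v) u)) (at s within {0..h})"
      unfolding \<phi>_def
      apply (rule has_derivative_diff)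
      apply (rule line_deriv) using fd m1 apply blast apply (simp add: algebra_simps)
      apply (rule line_deriv) using fd m2 apply blast apply (simp add: algebra_simps)
      done
  qed
  then obtain s where s: "s \<in> {0<..<h}" and s1: "\<phi> h - \<phi> 0 = h * (Df f (q + s *\<^sub>R u + h *\<^sub>R v) u - Df f (q + s *\<^sub>R u + 0 *\<^sub>R v) u)"
    by (auto simp: algebra_simps)
  define g where "g = (\<lambda>x. Df f x u)"
  have "\<exists>t\<in>{0<..<h}. g (q + s *\<^sub>R u + h *\<^sub>R v) - g (q + s *\<^sub>R u + 0 *\<^sub>R v) = (\<lambda>d. d * Df g (q + s *\<^sub>R u + t *\<^sub>R v) v) (h - 0)"
  proof (rule mvt_simple[OF h])
    fix t assume t: "0 \<le> t" "t \<le> h"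
    have m1: "q + s *\<^sub>R u + t *\<^sub>R v \<in> U" using box s t h by auto
    show "((\<lambda>t. g (q + s *\<^sub>R u + t *\<^sub>R v)) has_derivative (\<lambda>d. d * Df g (q + s *\<^sub>R u + t *\<^sub>R v) v)) (at t within {0..h})"
      apply (rule line_deriv) using gd m1 g_def apply blast by simp
  qed
  then obtain t where t: "t \<in> {0<..<h}" and t1: "g (q + s *\<^sub>R u + h *\<^sub>R v) - g (q + s *\<^sub>R u + 0 *\<^sub>R v) = h * Df g (q + s *\<^sub>R u + t *\<^sub>R v) v"
    by auto
  have "f (q + h *\<^sub>R u + h *\<^sub>R v) - f (q + h *\<^sub>R u) - f (q + h *\<^sub>R v) + f q = \<phi> h - \<phi> 0"
    unfolding \<phi>_def by (simp add: algebra_simps)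
  also have "\<dots> = h^2 * Df g (q + s *\<^sub>R u + t *\<^sub>R v) v"
    using s1 t1 unfolding g_def by (simp add: power2_eq_square)
  finally show ?thesis using s t unfolding g_def by force
qed



lemma Ck2_facts:
  assumes "Ck_on 2 U f"
  shows "\<forall>x\<in>U. f differentiable (at x)"
    and "\<And>u. \<forall>x\<in>U. (\<lambda>x. Df f x u) differentiable (at x)"
    and "\<And>u w. continuous_on U (\<lambda>x. Df (\<lambda>x. Df f x u) x w)"
  using assms by (simp_all add: numeral_2_eq_2)

lemma schwarz:
  fixes f :: "'a::euclidean_space \<Rightarrow> real"
  assumes U: "open U" "q \<in> U" and C2: "Ck_on 2 U f"
  shows "Df (\<lambda>x. Df f x u) q v = Df (\<lambda>x. Df f x v) q u"
proof (rule ccontr)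
  define A where "A x = Df (\<lambda>x. Df f x u) x v" for x
  define B where "B x = Df (\<lambda>x. Df f x v) x u" for x
  assume ne: "\<not> ?thesis"
  hence ne': "A q \<noteq> B q" unfolding A_def B_def .
  define e where "e = \<bar>A q - B q\<bar> / 2"
  have e: "e > 0" using ne' unfolding e_def by auto
  have cA: "continuous_on U A" and cB: "continuous_on U B"
    unfolding A_def B_def using Ck2_facts(3)[OF C2] by auto
  obtain d1 where d1: "d1 > 0" "\<forall>x'\<in>U. dist x' q < d1 \<longrightarrow> dist (A x') (A q) < e"
    using cA U(2) e unfolding continuous_on_iff by blast
  obtain d2 where d2: "d2 > 0" "\<forall>x'\<in>U. dist x' q < d2 \<longrightarrow> dist (B x') (B q) < e"
    using cB U(2) e unfolding continuous_on_iff by blast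
  obtain d3 where d3: "d3 > 0" "ball q d3 \<subseteq> U"
    using U open_contains_ball by blast
  define d where "d = min d1 (min d2 d3)"
  have d: "d > 0" using d1 d2 d3 by (simp add: d_def)
  define h where "h = d / (2 * (norm u + norm v + 1))"
  have nn: "norm u + norm v + 1 > 0" using norm_ge_zero[of u] norm_ge_zero[of v] by linarith
  have h: "h > 0" using d nn unfolding h_def by simp
  have hb: "h * (norm u + norm v) < d"
  proof -
    have "h * (norm u + norm v) \<le> h * (norm u + norm v + 1)" using h by simp
    also have "\<dots> = d / 2" unfolding h_def using nn by (simp add: field_simps)
    finally show ?thesis using d by simp
  qed
  have near: "dist (q + s *\<^sub>R a + t *\<^sub>R b) q < d"
    if "s \<in> {0..h}" "t \<in> {0..h}" "(a = u \<and> b = v) \<or> (a = v \<and> b = u)" for s t a b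
  proof -
    have "dist (q + s *\<^sub>R a + t *\<^sub>R b) q = norm (s *\<^sub>R a + t *\<^sub>R b)"
      by (simp add: dist_norm)
    also have "\<dots> \<le> s * norm a + t * norm b"
      using that norm_triangle_ineq[of "s *\<^sub>R a" "t *\<^sub>R b"] by auto
    also have "\<dots> \<le> h * norm a + h * norm b"
      using that by (intro add_mono mult_right_mono) auto
    also have "\<dots> = h * (norm u + norm v)" using that by (auto simp: algebra_simps)
    finally show ?thesis using hb by simp
  qed
  have inU: "q + s *\<^sub>R a + t *\<^sub>R b \<in> U"
    if "s \<in> {0..h}" "t \<in> {0..h}" "(a = u \<and> b = v) \<or> (a = v \<and> b = u)" for s t a b
    using near[OF that] d3 by (auto simp: d_def dist_commute subset_iff)
  obtain s1 t1 where st1: "s1 \<in> {0..h}" "t1 \<in> {0..h}"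
    and E1: "f (q + h *\<^sub>R u + h *\<^sub>R v) - f (q + h *\<^sub>R u) - f (q + h *\<^sub>R v) + f q
           = h^2 * A (q + s1 *\<^sub>R u + t1 *\<^sub>R v)"
    using mixed_mvt[of h q u v U f, OF _ Ck2_facts(1,2)[OF C2] h] inU unfolding A_def by blast
  obtain s2 t2 where st2: "s2 \<in> {0..h}" "t2 \<in> {0..h}"
    and E2: "f (q + h *\<^sub>R v + h *\<^sub>R u) - f (q + h *\<^sub>R v) - f (q + h *\<^sub>R u) + f q
           = h^2 * B (q + s2 *\<^sub>R v + t2 *\<^sub>R u)"
    using mixed_mvt[of h q v u U f, OF _ Ck2_facts(1,2)[OF C2] h] inU unfolding B_def by blast
  have eq: "q + h *\<^sub>R v + h *\<^sub>R u = q + h *\<^sub>R u + h *\<^sub>R v" by (simp add: algebra_simps)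
  have "h^2 * A (q + s1 *\<^sub>R u + t1 *\<^sub>R v) = h^2 * B (q + s2 *\<^sub>R v + t2 *\<^sub>R u)"
    using E1 E2[unfolded eq] by linarith
  hence AB: "A (q + s1 *\<^sub>R u + t1 *\<^sub>R v) = B (q + s2 *\<^sub>R v + t2 *\<^sub>R u)" using h by simp
  have "dist (A (q + s1 *\<^sub>R u + t1 *\<^sub>R v)) (A q) < e"
    using d1 near[OF st1] inU[OF st1] by (simp add: d_def)
  moreover have "dist (B (q + s2 *\<^sub>R v + t2 *\<^sub>R u)) (B q) < e"
    using d2 near[OF st2] inU[OF st2] by (simp add: d_def)
  ultimately have "\<bar>A q - B q\<bar> < 2 * e" using AB by (simp add: dist_real_def)
  thus False unfolding e_def by simp
qed



lemma lin_expand: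
  fixes L :: "'a::euclidean_space \<Rightarrow> real"
  assumes "linear L"
  shows "L c = (\<Sum>i\<in>Basis. (c \<bullet> i) * L i)"
proof -
  have "L c = L (\<Sum>i\<in>Basis. (c \<bullet> i) *\<^sub>R i)" by (simp add: euclidean_representation)
  also have "\<dots> = (\<Sum>i\<in>Basis. (c \<bullet> i) * L i)"
    using assms by (simp add: real_vector.linear_sum linear_cmul)
  finally show ?thesis .
qed

lemma Df_expand:
  fixes f :: "'a::euclidean_space \<Rightarrow> real"
  assumes "f differentiable (at x)"
  shows "Df f x c = (\<Sum>i\<in>Basis. (c \<bullet> i) * Df f x i)"
  using lin_expand[OF linear_frechet_derivative[OF assms]] .

lemma vf_deriv:
  fixes f :: "'a::euclidean_space \<Rightarrow> real" and X :: "'a \<Rightarrow> 'a"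
  assumes U: "open U" "q \<in> U" and C2: "Ck_on 2 U f" and Xd: "X differentiable (at q)"
  shows "((\<lambda>x. vf_apply X f x) has_derivative
           (\<lambda>w. Df f q (Df X q w) + Df (\<lambda>x. Df f x (X q)) q w)) (at q)"
proof -
  note fd = Ck2_facts(1)[OF C2] and gd = Ck2_facts(2)[OF C2]
  have rep: "vf_apply X f x = (\<Sum>i\<in>Basis. (X x \<bullet> i) * Df f x i)" if "x \<in> U" for x
    unfolding vf_apply_def using Df_expand fd that by blast
  have dX: "(X has_derivative Df X q) (at q)" using Xd frechet_derivative_works by blast
  have dg: "((\<lambda>x. Df f x i) has_derivative Df (\<lambda>x. Df f x i) q) (at q)" for i
    using gd U(2) frechet_derivative_works by blast
  have D1: "((\<lambda>x. \<Sum>i\<in>Basis. (X x \<bullet> i) * Df f x i) has_derivative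
      (\<lambda>w. \<Sum>i\<in>Basis. (Df X q w \<bullet> i) * Df f q i + (X q \<bullet> i) * Df (\<lambda>x. Df f x i) q w)) (at q)"
    apply (rule has_derivative_sum)
    apply (rule has_derivative_eq_rhs)
     apply (rule has_derivative_mult[OF bounded_linear.has_derivative[OF bounded_linear_inner_left dX] dg])
    by (auto simp: algebra_simps fun_eq_iff)
  have D2: "((\<lambda>x. vf_apply X f x) has_derivative
      (\<lambda>w. \<Sum>i\<in>Basis. (Df X q w \<bullet> i) * Df f q i + (X q \<bullet> i) * Df (\<lambda>x. Df f x i) q w)) (at q)"
    using has_derivative_transform_within_open[OF D1 U(1) U(2)] rep by auto
  have D3: "((\<lambda>x. Df f x (X q)) has_derivative (\<lambda>w. \<Sum>i\<in>Basis. (X q \<bullet> i) * Df (\<lambda>x. Df f x i) q w)) (at q)"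
  proof -
    have "((\<lambda>x. \<Sum>i\<in>Basis. (X q \<bullet> i) * Df f x i) has_derivative (\<lambda>w. \<Sum>i\<in>Basis. (X q \<bullet> i) * Df (\<lambda>x. Df f x i) q w)) (at q)"
      apply (rule has_derivative_sum)
      apply (rule has_derivative_eq_rhs)
       apply (rule has_derivative_mult[OF has_derivative_const dg])
      by (auto simp: algebra_simps fun_eq_iff)
    then show ?thesis
      using has_derivative_transform_within_open[OF _ U(1) U(2)] Df_expand fd
      by (smt (verit, ccfv_SIG) sum.cong)
  qed
  have E3: "Df (\<lambda>x. Df f x (X q)) q = (\<lambda>w. \<Sum>i\<in>Basis. (X q \<bullet> i) * Df (\<lambda>x. Df f x i) q w)"
    using D3 gd U(2) frechet_derivative_works has_derivative_unique by blast
  have E1: "Df f q (Df X q w) = (\<Sum>i\<in>Basis. (Df X q w \<bullet> i) * Df f q i)" for w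
    using Df_expand fd U(2) by blast
  show ?thesis using D2 unfolding E3 E1 by (simp add: sum.distrib)
qed



lemma T_bij:
  fixes L :: "nat \<Rightarrow> 'a::euclidean_space \<Rightarrow> real" and b :: "nat \<Rightarrow> 'a"
  assumes lin: "\<forall>j<DIM('a). linear (L j)"
    and indep: "\<forall>c::nat \<Rightarrow> real. (\<forall>v. (\<Sum>j<DIM('a). c j * L j v) = 0) \<longrightarrow> (\<forall>j<DIM('a). c j = 0)"
    and b: "bij_betw b {..<DIM('a)} Basis"
  shows "linear (\<lambda>v. \<Sum>j<DIM('a). L j v *\<^sub>R b j)" "bij (\<lambda>v. \<Sum>j<DIM('a). L j v *\<^sub>R b j)"
proof -
  define T where "T = (\<lambda>v. \<Sum>j<DIM('a). L j v *\<^sub>R b j)"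
  show lT: "linear (\<lambda>v. \<Sum>j<DIM('a). L j v *\<^sub>R b j)"
    using lin by (intro linear_compose_sum) (auto intro!: linearI simp: linear_add linear_cmul scaleR_add_left)
  have "surj T"
  proof (rule ccontr)
    assume ns: "\<not> surj T"
    have sub: "subspace (range T)" using lT unfolding T_def by (simp add: linear_subspace_image)
    hence "span (range T) = range T" using span_eq_iff by blast
    hence "span (range T) \<noteq> UNIV" using ns by metis
    hence "dim (range T) < DIM('a)"
      using dim_eq_full[of "range T"] dim_subset_UNIV[of "range T"] by linarith
    then obtain u :: 'a where u: "u \<noteq> 0" "\<And>y. y \<in> span (range T) \<Longrightarrow> orthogonal u y"
      using orthogonal_to_subspace_exists by blast
    have "\<forall>v. (\<Sum>j<DIM('a). (u \<bullet> b j) * L j v) = 0"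
    proof
      fix v
      have "orthogonal u (T v)" using u(2) span_base by blast
      hence "u \<bullet> T v = 0" by (simp add: orthogonal_def)
      thus "(\<Sum>j<DIM('a). (u \<bullet> b j) * L j v) = 0"
        unfolding T_def by (simp add: inner_sum_right mult.commute)
    qed
    hence z: "\<forall>j<DIM('a). u \<bullet> b j = 0" using indep[rule_format, of "\<lambda>j. u \<bullet> b j"] by blast
    have "\<forall>i\<in>Basis. u \<bullet> i = 0"
    proof
      fix i :: 'a assume "i \<in> Basis"
      then obtain j where "j < DIM('a)" "i = b j" using b unfolding bij_betw_def by auto
      thus "u \<bullet> i = 0" using z by simp
    qed
    hence "u = 0" using euclidean_all_zero_iff by blast
    thus False using u(1) by simp
  qed
  moreover have "inj T" using calculation lT unfolding T_def by (intro linear_surj_imp_inj) auto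
  ultimately show "bij (\<lambda>v. \<Sum>j<DIM('a). L j v *\<^sub>R b j)" unfolding T_def bij_def by simp
qed

lemma T_zero:
  fixes L :: "nat \<Rightarrow> 'a::euclidean_space \<Rightarrow> real"
  assumes lin: "\<forall>j<DIM('a). linear (L j)"
    and indep: "\<forall>c::nat \<Rightarrow> real. (\<forall>v. (\<Sum>j<DIM('a). c j * L j v) = 0) \<longrightarrow> (\<forall>j<DIM('a). c j = 0)"
    and z: "\<forall>j<DIM('a). L j v = 0"
  shows "v = 0"
proof -
  obtain b where b: "bij_betw b {..<DIM('a)} (Basis::'a set)"
    using ex_bij_betw_nat_finite[of "Basis::'a set"] by (auto simp: atLeast0LessThan)
  note T = T_bij[OF lin indep b]
  have "(\<lambda>v. \<Sum>j<DIM('a). L j v *\<^sub>R b j) v = (\<lambda>v. \<Sum>j<DIM('a). L j v *\<^sub>R b j) 0"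
    using z lin by (auto simp: linear_0 intro!: sum.neutral)
  thus ?thesis using T(2) unfolding bij_def inj_def by blast
qed



locale sep_setting =
  fixes U :: "'a::euclidean_space set" and Xp Xs :: "'a \<Rightarrow> 'a" and y :: "nat \<Rightarrow> 'a \<Rightarrow> real"
    and xa xb :: "'a \<Rightarrow> real" and ia ib :: nat
  assumes U: "open U"
    and Xd: "\<forall>q\<in>U. Xp differentiable (at q) \<and> Xs differentiable (at q)"
    and indepX: "\<forall>q\<in>U. \<forall>a b. a *\<^sub>R Xp q + b *\<^sub>R Xs q = 0 \<longrightarrow> a = 0 \<and> b = 0"
    and comm: "\<forall>q\<in>U. Df Xs q (Xp q) - Df Xp q (Xs q) = 0"
    and smooth_y: "\<forall>j<DIM('a). smooth_on U (y j)"
    and ia: "ia < DIM('a)" and ib: "ib < DIM('a)" and iab: "ia \<noteq> ib"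
    and ya: "y ia = xa" and yb: "y ib = xb"
    and integ: "\<forall>j<DIM('a). j \<noteq> ia \<longrightarrow> j \<noteq> ib \<longrightarrow> (\<forall>q\<in>U. vf_apply Xp (y j) q = 0 \<and> vf_apply Xs (y j) q = 0)"
    and indep: "\<forall>q\<in>U. indep_differentials y DIM('a) q"
    and ds: "\<forall>q\<in>U. vf_apply Xs xa q = - xb q * vf_apply Xp xa q \<and> vf_apply Xs xb q = - xa q * vf_apply Xp xb q"
    and dist: "\<forall>q\<in>U. xa q \<noteq> xb q"
begin

lemma Ck_y: "j < DIM('a) \<Longrightarrow> Ck_on k U (y j)"
  using smooth_y unfolding smooth_on_def by blast

lemma yd: "j < DIM('a) \<Longrightarrow> q \<in> U \<Longrightarrow> y j differentiable (at q)"
  using Ck_y[of j 1] by simp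

lemma ylin: "j < DIM('a) \<Longrightarrow> q \<in> U \<Longrightarrow> linear (Df (y j) q)"
  using yd linear_frechet_derivative by blast

lemma zero_vec:
  assumes "q \<in> U" "\<forall>j<DIM('a). Df (y j) q v = 0"
  shows "v = 0"
  using T_zero[of "\<lambda>j. Df (y j) q"] ylin indep assms unfolding indep_differentials_def by blast

lemma xad: "q \<in> U \<Longrightarrow> xa differentiable (at q)" using yd ia ya by blast
lemma xbd: "q \<in> U \<Longrightarrow> xb differentiable (at q)" using yd ib yb by blast
lemma xalin: "q \<in> U \<Longrightarrow> linear (Df xa q)" using ylin ia ya by blast
lemma xblin: "q \<in> U \<Longrightarrow> linear (Df xb q)" using ylin ib yb by blast

lemma D_comb:
  assumes "j < DIM('a)" "q \<in> U"
  shows "Df (y j) q (Xs q + c *\<^sub>R Xp q) = vf_apply Xs (y j) q + c * vf_apply Xp (y j) q"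
  using ylin[OF assms] unfolding vf_apply_def by (simp add: linear_add linear_cmul)

definition psi :: "'a \<Rightarrow> real" where
  "psi q = vf_apply Xs xa q + xa q * vf_apply Xp xa q"

lemma w1_props:
  assumes q: "q \<in> U" and j: "j < DIM('a)"
  shows "Df (y j) q (Xs q + xa q *\<^sub>R Xp q) = (if j = ia then psi q else 0)"
proof -
  have e: "Df (y j) q (Xs q + xa q *\<^sub>R Xp q) = vf_apply Xs (y j) q + xa q * vf_apply Xp (y j) q"
    using D_comb[OF j q] .
  show ?thesis
  proof (cases "j = ia")
    case True thus ?thesis using e ya psi_def by simp
  next
    case F: False
    show ?thesis
    proof (cases "j = ib")
      case True thus ?thesis using e yb ds q F by (simp add: algebra_simps)
    next
      case False thus ?thesis using e integ j q F by simp
    qed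
  qed
qed

lemma psi_nz: "q \<in> U \<Longrightarrow> psi q \<noteq> 0"
proof
  assume q: "q \<in> U" and z: "psi q = 0"
  have "Xs q + xa q *\<^sub>R Xp q = 0" using zero_vec[OF q] w1_props[OF q] z by simp
  hence "xa q *\<^sub>R Xp q + 1 *\<^sub>R Xs q = 0" by (simp add: algebra_simps)
  hence "xa q = 0 \<and> (1::real) = 0" using indepX q by blast
  thus False by simp
qed

lemma coord_vec_eq:
  assumes q: "q \<in> U"
  shows "coord_vec y DIM('a) ia q = (1 / psi q) *\<^sub>R (Xs q + xa q *\<^sub>R Xp q)"
  unfolding coord_vec_def
proof (rule the_equality)
  show "\<forall>j<DIM('a). Df (y j) q ((1 / psi q) *\<^sub>R (Xs q + xa q *\<^sub>R Xp q)) = (if j = ia then 1 else 0)"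
    using w1_props[OF q] psi_nz[OF q] ylin[OF _ q] by (simp add: linear_cmul)
next
  fix v assume v: "\<forall>j<DIM('a). Df (y j) q v = (if j = ia then 1 else 0)"
  have "\<forall>j<DIM('a). Df (y j) q (v - (1 / psi q) *\<^sub>R (Xs q + xa q *\<^sub>R Xp q)) = 0"
    using v w1_props[OF q] psi_nz[OF q] ylin[OF _ q] by (simp add: linear_cmul linear_diff)
  thus "v = (1 / psi q) *\<^sub>R (Xs q + xa q *\<^sub>R Xp q)" using zero_vec[OF q, of "v - (1 / psi q) *\<^sub>R (Xs q + xa q *\<^sub>R Xp q)"] by simp
qed

lemma part1: "q \<in> U \<Longrightarrow> Xs q + xa q *\<^sub>R Xp q = psi q *\<^sub>R coord_vec y DIM('a) ia q"
  using coord_vec_eq psi_nz by simp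

end



context sep_setting begin

lemma C2a: "Ck_on 2 U xa" using Ck_y[OF ia] ya by simp

definition DP where "DP x w = Df xa x (Df Xp x w) + Df (\<lambda>z. Df xa z (Xp x)) x w"
definition DS where "DS x w = Df xa x (Df Xs x w) + Df (\<lambda>z. Df xa z (Xs x)) x w"
definition Lpsi where "Lpsi x w = (Df xa x w - Df xb x w) * vf_apply Xp xa x + (xa x - xb x) * DP x w"

lemma dP: "x \<in> U \<Longrightarrow> ((\<lambda>z. vf_apply Xp xa z) has_derivative DP x) (at x)"
  unfolding DP_def using vf_deriv[OF U _ C2a] Xd by blast
lemma dS: "x \<in> U \<Longrightarrow> ((\<lambda>z. vf_apply Xs xa z) has_derivative DS x) (at x)"
  unfolding DS_def using vf_deriv[OF U _ C2a] Xd by blast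
lemma dxa: "x \<in> U \<Longrightarrow> (xa has_derivative Df xa x) (at x)"
  using xad frechet_derivative_works by blast
lemma dxb: "x \<in> U \<Longrightarrow> (xb has_derivative Df xb x) (at x)"
  using xbd frechet_derivative_works by blast

lemma DS_eq:
  assumes x: "x \<in> U"
  shows "DS x w = - (Df xb x w * vf_apply Xp xa x + xb x * DP x w)"
proof -
  have "((\<lambda>z. - (xb z * vf_apply Xp xa z)) has_derivative (\<lambda>w. - (xb x * DP x w + Df xb x w * vf_apply Xp xa x))) (at x)"
    by (intro has_derivative_minus has_derivative_mult dxb dP x)
  hence "((\<lambda>z. vf_apply Xs xa z) has_derivative (\<lambda>w. - (xb x * DP x w + Df xb x w * vf_apply Xp xa x))) (at x)"
    using has_derivative_transform_within_open[OF _ U x, of "\<lambda>z. - (xb z * vf_apply Xp xa z)" _ UNIV "\<lambda>z. vf_apply Xs xa z"] ds by auto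
  hence "DS x = (\<lambda>w. - (xb x * DP x w + Df xb x w * vf_apply Xp xa x))"
    using dS[OF x] has_derivative_unique by blast
  thus ?thesis by (simp add: algebra_simps)
qed

lemma dpsi: "x \<in> U \<Longrightarrow> (psi has_derivative Lpsi x) (at x)"
proof -
  assume x: "x \<in> U"
  have "((\<lambda>z. (xa z - xb z) * vf_apply Xp xa z) has_derivative (\<lambda>w. (xa x - xb x) * DP x w + (Df xa x w - Df xb x w) * vf_apply Xp xa x)) (at x)"
    by (intro has_derivative_mult has_derivative_diff dxa dxb dP x)
  hence "((\<lambda>z. (xa z - xb z) * vf_apply Xp xa z) has_derivative Lpsi x) (at x)"
    unfolding Lpsi_def by (simp add: algebra_simps)
  moreover have "\<And>z. z \<in> U \<Longrightarrow> (xa z - xb z) * vf_apply Xp xa z = psi z"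
    using ds unfolding psi_def by (simp add: algebra_simps)
  ultimately show ?thesis
    using has_derivative_transform_within_open[OF _ U x] by blast
qed

lemma DP_lin: "x \<in> U \<Longrightarrow> linear (DP x)"
  using dP has_derivative_linear by blast
lemma Lpsi_lin: "x \<in> U \<Longrightarrow> linear (Lpsi x)"
  using dpsi has_derivative_linear by blast

lemma kill_w2:
  assumes x: "x \<in> U"
  shows "Lpsi x (Xs x + xb x *\<^sub>R Xp x) = 0"
proof -
  have sw: "Df (\<lambda>z. Df xa z (Xs x)) x (Xp x) = Df (\<lambda>z. Df xa z (Xp x)) x (Xs x)"
    using schwarz[OF U x C2a] .
  have cm: "Df Xs x (Xp x) = Df Xp x (Xs x)" using comm x by simp
  have "DS x (Xp x) = DP x (Xs x)" unfolding DS_def DP_def using sw cm by simp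
  hence e1: "DP x (Xs x) = - (Df xb x (Xp x) * vf_apply Xp xa x + xb x * DP x (Xp x))"
    using DS_eq[OF x] by simp
  have e2: "DP x (Xs x + xb x *\<^sub>R Xp x) = DP x (Xs x) + xb x * DP x (Xp x)"
    using DP_lin[OF x] by (simp add: linear_add linear_cmul)
  have ea: "Df xa x (Xs x + xb x *\<^sub>R Xp x) = 0"
    using xalin[OF x] ds x unfolding vf_apply_def by (simp add: linear_add linear_cmul)
  have eb: "Df xb x (Xs x + xb x *\<^sub>R Xp x) = (xb x - xa x) * Df xb x (Xp x)"
    using xblin[OF x] ds x unfolding vf_apply_def by (simp add: linear_add linear_cmul algebra_simps)
  have e3: "DP x (Xs x + xb x *\<^sub>R Xp x) = - (Df xb x (Xp x) * vf_apply Xp xa x)"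
    using e1 e2 by simp
  show ?thesis unfolding Lpsi_def ea eb e3
    by (simp add: algebra_simps)
qed

lemma psi2_nz:
  assumes x: "x \<in> U"
  shows "Df xb x (Xs x + xb x *\<^sub>R Xp x) \<noteq> 0"
proof
  assume z: "Df xb x (Xs x + xb x *\<^sub>R Xp x) = 0"
  have "\<forall>j<DIM('a). Df (y j) x (Xs x + xb x *\<^sub>R Xp x) = 0"
  proof (intro allI impI)
    fix j assume j: "j < DIM('a)"
    have e: "Df (y j) x (Xs x + xb x *\<^sub>R Xp x) = vf_apply Xs (y j) x + xb x * vf_apply Xp (y j) x"
      using D_comb[OF j x] .
    show "Df (y j) x (Xs x + xb x *\<^sub>R Xp x) = 0"
    proof (cases "j = ib")
      case True thus ?thesis using z yb by simp
    next
      case F: False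
      show ?thesis
      proof (cases "j = ia")
        case True thus ?thesis using e ya ds x by (simp add: algebra_simps)
      next
        case False thus ?thesis using e integ j x F by simp
      qed
    qed
  qed
  hence "Xs x + xb x *\<^sub>R Xp x = 0" using zero_vec[OF x] by blast
  hence "xb x *\<^sub>R Xp x + 1 *\<^sub>R Xs x = 0" by (simp add: algebra_simps)
  hence "xb x = 0 \<and> (1::real) = 0" using indepX x by blast
  thus False by simp
qed

lemma kill:
  assumes x: "x \<in> U" and u: "\<forall>j<DIM('a). j \<noteq> ib \<longrightarrow> Df (y j) x u = 0"
  shows "Lpsi x u = 0"
proof -
  define w2 where "w2 = Xs x + xb x *\<^sub>R Xp x"
  define c where "c = Df xb x u / Df xb x w2"
  have nz: "Df xb x w2 \<noteq> 0" using psi2_nz[OF x] unfolding w2_def .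
  have w2z: "\<forall>j<DIM('a). j \<noteq> ib \<longrightarrow> Df (y j) x w2 = 0"
  proof (intro allI impI)
    fix j assume j: "j < DIM('a)" "j \<noteq> ib"
    have e: "Df (y j) x w2 = vf_apply Xs (y j) x + xb x * vf_apply Xp (y j) x"
      using D_comb[OF j(1) x] unfolding w2_def .
    show "Df (y j) x w2 = 0"
    proof (cases "j = ia")
      case True thus ?thesis using e ya ds x by (simp add: algebra_simps)
    next
      case False thus ?thesis using e integ j x by simp
    qed
  qed
  have "\<forall>j<DIM('a). Df (y j) x (u - c *\<^sub>R w2) = 0"
  proof (intro allI impI)
    fix j assume j: "j < DIM('a)"
    show "Df (y j) x (u - c *\<^sub>R w2) = 0"
    proof (cases "j = ib")
      case True thus ?thesis using xblin[OF x] yb nz unfolding c_def by (simp add: linear_diff linear_cmul)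
    next
      case False thus ?thesis using u w2z j ylin[OF j x] by (simp add: linear_diff linear_cmul)
    qed
  qed
  hence "u = c *\<^sub>R w2" using zero_vec[OF x, of "u - c *\<^sub>R w2"] by simp
  thus ?thesis using kill_w2[OF x] Lpsi_lin[OF x] unfolding w2_def by (simp add: linear_cmul)
qed

end



lemma inner_b:
  fixes b :: "nat \<Rightarrow> 'a::euclidean_space"
  assumes b: "bij_betw b {..<DIM('a)} Basis" and k: "k < DIM('a)"
  shows "(\<Sum>j<DIM('a). c j *\<^sub>R b j) \<bullet> b k = c k"
proof -
  have "(\<Sum>j<DIM('a). c j *\<^sub>R b j) \<bullet> b k = (\<Sum>j<DIM('a). c j * (b j \<bullet> b k))"
    by (simp add: inner_sum_left)
  also have "\<dots> = (\<Sum>j<DIM('a). if j = k then c j else 0)"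
  proof (rule sum.cong)
    fix j assume j: "j \<in> {..<DIM('a)}"
    have bj: "b j \<in> Basis" and bk: "b k \<in> Basis" using b j k unfolding bij_betw_def by auto
    have "b j = b k \<longleftrightarrow> j = k" using b j k unfolding bij_betw_def inj_on_def by auto
    thus "c j * (b j \<bullet> b k) = (if j = k then c j else 0)" using inner_Basis[OF bj bk] by auto
  qed simp
  also have "\<dots> = c k" using k by simp
  finally show ?thesis .
qed

context sep_setting begin

lemma part2:
  assumes p: "p \<in> U"
  shows "\<exists>V. open V \<and> p \<in> V \<and> V \<subseteq> U \<and>
           (\<forall>q\<in>V. \<forall>q'\<in>V. (\<forall>j<DIM('a). j \<noteq> ib \<longrightarrow> y j q = y j q') \<longrightarrow> psi q = psi q')"
proof -
  obtain b :: "nat \<Rightarrow> 'a" where b: "bij_betw b {..<DIM('a)} Basis"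
    using ex_bij_betw_nat_finite[of "Basis::'a set"] by (auto simp: atLeast0LessThan)
  define Phi where "Phi x = (\<Sum>j<DIM('a). y j x *\<^sub>R b j)" for x
  define Phi' where "Phi' x v = (\<Sum>j<DIM('a). Df (y j) x v *\<^sub>R b j)" for x v
  define f' where "f' x = Blinfun (Phi' x)" for x
  have linP: "linear (Phi' x)" if "x \<in> U" for x
    unfolding Phi'_def using ylin[OF _ that]
    by (intro linear_compose_sum) (auto intro!: linearI simp: linear_add linear_cmul scaleR_add_left)
  have f'a: "blinfun_apply (f' x) = Phi' x" if "x \<in> U" for x
    unfolding f'_def using linP[OF that] by (simp add: linear_conv_bounded_linear bounded_linear_Blinfun_apply)
  have dPhi: "(Phi has_derivative blinfun_apply (f' x)) (at x)" if x: "x \<in> U" for x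
  proof -
    have "(Phi has_derivative Phi' x) (at x)"
      unfolding Phi_def Phi'_def
      apply (rule has_derivative_sum)
      apply (rule has_derivative_scaleR_left)
      using yd[OF _ x] frechet_derivative_works by blast
    thus ?thesis using f'a[OF x] by simp
  qed
  have cont: "continuous_on U f'"
  proof (rule continuous_on_blinfun_componentwise)
    fix i :: 'a
    have "continuous_on U (\<lambda>x. \<Sum>j<DIM('a). Df (y j) x i *\<^sub>R b j)"
    proof (intro continuous_on_sum continuous_on_scaleR continuous_on_const)
      fix j assume j: "j \<in> {..<DIM('a)}"
      from Ck_y[of j "Suc 0"] j show "continuous_on U (\<lambda>x. Df (y j) x i)" by simp
    qed
    thus "continuous_on U (\<lambda>x. blinfun_apply (f' x) i)"
      by (rule continuous_on_cong[THEN iffD1, rotated 2]) (auto simp: f'a Phi'_def)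
  qed
  have bijp: "bij (Phi' p)"
    unfolding Phi'_def
    by (rule T_bij(2)[OF _ _ b]) (use ylin[OF _ p] indep p in \<open>auto simp: indep_differentials_def\<close>)
  obtain g0 where g0: "linear g0" "g0 \<circ> Phi' p = id"
    using real_vector.linear_injective_left_inverse[OF linP[OF p]] bijp unfolding bij_def by blast
  define invf where "invf = Blinfun g0"
  have invf: "invf o\<^sub>L f' p = id_blinfun"
  proof (rule blinfun_eqI)
    fix v
    have "blinfun_apply invf = g0" unfolding invf_def using g0(1)
      by (simp add: linear_conv_bounded_linear bounded_linear_Blinfun_apply)
    thus "blinfun_apply (invf o\<^sub>L f' p) v = blinfun_apply id_blinfun v"
      using f'a[OF p] g0(2) by (simp add: fun_eq_iff)
  qed
  obtain U' V' g g' where U': "open U'" "U' \<subseteq> U" "p \<in> U'" and V': "open V'" "Phi p \<in> V'"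
    and hom: "homeomorphism U' V' Phi g"
    and dg: "\<And>z. z \<in> V' \<Longrightarrow> (g has_derivative (g' z)) (at z)"
    and g': "\<And>z. z \<in> V' \<Longrightarrow> g' z = inv (blinfun_apply (f'(g z)))"
    and bijg: "\<And>z. z \<in> V' \<Longrightarrow> bij (blinfun_apply (f'(g z)))"
    using inverse_function_theorem[OF U dPhi cont p invf] by blast
  obtain r where r: "r > 0" "ball (Phi p) r \<subseteq> V'" using V' open_contains_ball by blast
  define V where "V = U' \<inter> Phi -` ball (Phi p) r"
  have hom': "\<forall>x\<in>U'. g (Phi x) = x" "Phi ` U' = V'" "continuous_on U' Phi" "\<forall>z\<in>V'. Phi (g z) = z" "g ` V' = U'"
    using hom unfolding homeomorphism_def by auto
  have openV: "open V" unfolding V_def using continuous_open_preimage[OF hom'(3) U'(1)] by simp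
  have pV: "p \<in> V" unfolding V_def using U' r by simp
  have VU: "V \<subseteq> U" unfolding V_def using U' by auto
  have main: "psi q = psi q'"
    if q: "q \<in> V" and q': "q' \<in> V" and same: "\<forall>j<DIM('a). j \<noteq> ib \<longrightarrow> y j q = y j q'" for q q'
  proof -
    define z0 where "z0 = Phi q"
    define z1 where "z1 = Phi q'"
    have z0: "z0 \<in> ball (Phi p) r" and z1: "z1 \<in> ball (Phi p) r" using q q' unfolding V_def z0_def z1_def by auto
    define zt where "zt t = z0 + t *\<^sub>R (z1 - z0)" for t
    have ztb: "zt t \<in> ball (Phi p) r" if "t \<in> {0..1}" for t
    proof -
      have "(1 - t) *\<^sub>R z0 + t *\<^sub>R z1 \<in> ball (Phi p) r"
        using convexD[OF convex_ball z0 z1, of "1 - t" t] that by auto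
      moreover have "(1 - t) *\<^sub>R z0 + t *\<^sub>R z1 = zt t" unfolding zt_def by (simp add: algebra_simps)
      ultimately show ?thesis by simp
    qed
    have ztV: "zt t \<in> V'" if "t \<in> {0..1}" for t using ztb[OF that] r by auto
    have gU: "g (zt t) \<in> U" if "t \<in> {0..1}" for t using ztV[OF that] hom'(5) U'(2) by auto
    have diffz: "z1 - z0 = (\<Sum>j<DIM('a). (y j q' - y j q) *\<^sub>R b j)"
      unfolding z0_def z1_def Phi_def by (simp add: sum_subtractf scaleR_diff_left)
    have der0: "((\<lambda>t. psi (g (zt t))) has_derivative (\<lambda>s. 0)) (at t within {0..1})"
      if t: "t \<in> {0..1}" for t
    proof -
      define x where "x = g (zt t)"
      have xU: "x \<in> U" using gU[OF t] x_def by simp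
      define u where "u = g' (zt t) (z1 - z0)"
      have "blinfun_apply (f' x) u = z1 - z0"
        unfolding u_def g'[OF ztV[OF t]] x_def
        using bijg[OF ztV[OF t]] by (simp add: bij_def surj_f_inv_f)
      hence Pu: "Phi' x u = z1 - z0" using f'a[OF xU] by simp
      have ku: "\<forall>j<DIM('a). j \<noteq> ib \<longrightarrow> Df (y j) x u = 0"
      proof (intro allI impI)
        fix k assume k: "k < DIM('a)" "k \<noteq> ib"
        have "Phi' x u \<bullet> b k = (z1 - z0) \<bullet> b k" using Pu by simp
        hence "Df (y k) x u = y k q' - y k q"
          unfolding Phi'_def diffz using inner_b[OF b k(1)] by simp
        thus "Df (y k) x u = 0" using same k by simp
      qed
      have L0: "Lpsi x u = 0" using kill[OF xU ku] .
      have d1: "(zt has_derivative (\<lambda>s. s *\<^sub>R (z1 - z0))) (at t within {0..1})"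
        unfolding zt_def by (auto intro!: derivative_eq_intros)
      have d2: "((\<lambda>t. g (zt t)) has_derivative (\<lambda>s. g' (zt t) (s *\<^sub>R (z1 - z0)))) (at t within {0..1})"
        using has_derivative_in_compose[OF d1 dg[OF ztV[OF t], THEN has_derivative_at_withinI]]
        by (simp add: o_def)
      have d3: "((\<lambda>t. psi (g (zt t))) has_derivative (\<lambda>s. Lpsi x (g' (zt t) (s *\<^sub>R (z1 - z0))))) (at t within {0..1})"
        using has_derivative_in_compose[OF d2 dpsi[OF xU, unfolded x_def, THEN has_derivative_at_withinI]]
        unfolding x_def by (simp add: o_def)
      have lg: "linear (g' (zt t))" using dg[OF ztV[OF t]] has_derivative_linear by blast
      have "Lpsi x (g' (zt t) (s *\<^sub>R (z1 - z0))) = 0" for s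
        using L0 lg Lpsi_lin[OF xU] unfolding u_def by (simp add: linear_cmul)
      thus ?thesis using d3 by simp
    qed
    have "psi (g (zt 0)) = psi (g (zt 1))"
      using has_derivative_zero_unique[OF convex_real_interval(5) der0, of 0 1] by simp
    moreover have "g (zt 0) = q" unfolding zt_def z0_def using hom'(1) q unfolding V_def by auto
    moreover have "g (zt 1) = q'" unfolding zt_def z1_def using hom'(1) q' unfolding V_def by auto
    ultimately show ?thesis by simp
  qed
  show ?thesis using openV pV VU main by blast
qed

end



lemma kow_alg:
  fixes E Es Ep x1 x2 s1 s2 p1 p2 Fs Fp Gs Gp F G :: real
  assumes E: "E \<noteq> 0" and d: "x1 \<noteq> x2"
    and F: "F = - (E * (x1 + x2))" and G: "G = E * (x1 * x2)"
    and Fs: "Fs = - (Es * (x1 + x2) + E * (s1 + s2))"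
    and Fp: "Fp = - (Ep * (x1 + x2) + E * (p1 + p2))"
    and Gs: "Gs = Es * (x1 * x2) + E * (s1 * x2 + x1 * s2)"
    and Gp: "Gp = Ep * (x1 * x2) + E * (p1 * x2 + x1 * p2)"
    and k1: "E * Fs - F * Es = E * Gp - G * Ep"
    and k2: "E * Gs - G * Es = F * Gp - G * Fp"
  shows "s1 = - x2 * p1 \<and> s2 = - x1 * p2"
proof -
  have e1: "E * Fs - F * Es - (E * Gp - G * Ep) = - (E * E * ((s1 + x2 * p1) + (s2 + x1 * p2)))"
    unfolding F G Fs Gp by algebra
  have "E * E * ((s1 + x2 * p1) + (s2 + x1 * p2)) = 0"
    using k1 e1 by simp
  hence a: "(s1 + x2 * p1) + (s2 + x1 * p2) = 0" using E by simp
  have e2: "E * Gs - G * Es - (F * Gp - G * Fp) = E * E * (x2 * (s1 + x2 * p1) + x1 * (s2 + x1 * p2))"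
    unfolding F G Gs Gp Fp by algebra
  have "E * E * (x2 * (s1 + x2 * p1) + x1 * (s2 + x1 * p2)) = 0"
    using k2 e2 by simp
  hence b: "x2 * (s1 + x2 * p1) + x1 * (s2 + x1 * p2) = 0" using E by simp
  have e3: "(x2 - x1) * (s1 + x2 * p1) = x2 * (s1 + x2 * p1) + x1 * (s2 + x1 * p2) - x1 * ((s1 + x2 * p1) + (s2 + x1 * p2))"
    by algebra
  have "(x2 - x1) * (s1 + x2 * p1) = 0" using a b e3 by simp
  hence "s1 + x2 * p1 = 0" using d by simp
  thus ?thesis using a by simp
qed

theorem proposition1:
  fixes U :: "'a::euclidean_space set"
    and Xp Xs :: "'a \<Rightarrow> 'a"
    and H :: "nat \<Rightarrow> 'a \<Rightarrow> real"
    and E F G x1 x2 :: "'a \<Rightarrow> real"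
  assumes U_open: "open U"
    and dim: "DIM('a) \<ge> 2"
    and smooth_X: "smooth_on U Xp" "smooth_on U Xs"
    and independent_X: "\<forall>q\<in>U. \<forall>a b. a *\<^sub>R Xp q + b *\<^sub>R Xs q = 0 \<longrightarrow> a = 0 \<and> b = 0"
    and commute: "commuting_on U Xp Xs"
    and smooth_H: "\<forall>k < DIM('a) - 2. smooth_on U (H k)"
    and integrals: "\<forall>k < DIM('a) - 2. \<forall>q\<in>U. vf_apply Xp (H k) q = 0 \<and> vf_apply Xs (H k) q = 0"
    and independent_H: "\<forall>q\<in>U. indep_differentials H (DIM('a) - 2) q"
    and smooth_EFG: "smooth_on U E" "smooth_on U F" "smooth_on U G"
    and kow1: "\<forall>q\<in>U. E q * vf_apply Xs F q - F q * vf_apply Xs E q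
                     = E q * vf_apply Xp G q - G q * vf_apply Xp E q"
    and kow2: "\<forall>q\<in>U. E q * vf_apply Xs G q - G q * vf_apply Xs E q
                     = F q * vf_apply Xp G q - G q * vf_apply Xp F q"
    and E_nonzero: "\<forall>q\<in>U. E q \<noteq> 0"
    and root1: "\<forall>q\<in>U. E q * (x1 q)\<^sup>2 + F q * x1 q + G q = 0"
    and root2: "\<forall>q\<in>U. E q * (x2 q)\<^sup>2 + F q * x2 q + G q = 0"
    and distinct_roots: "\<forall>q\<in>U. x1 q \<noteq> x2 q"
    and smooth_roots: "smooth_on U x1" "smooth_on U x2"
    and coordinate_system: "\<forall>q\<in>U. indep_differentials (coords x1 x2 H) DIM('a) q"
  shows "(\<exists>\<psi>1. (\<forall>q\<in>U. Xs q + x1 q *\<^sub>R Xp q = \<psi>1 q *\<^sub>R coord_vec (coords x1 x2 H) DIM('a) 0 q)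
              \<and> (\<forall>p\<in>U. \<exists>V. open V \<and> p \<in> V \<and> V \<subseteq> U \<and>
                   (\<forall>q\<in>V. \<forall>q'\<in>V. x1 q = x1 q' \<and> (\<forall>k < DIM('a) - 2. H k q = H k q')
                      \<longrightarrow> \<psi>1 q = \<psi>1 q')))
       \<and> (\<exists>\<psi>2. (\<forall>q\<in>U. Xs q + x2 q *\<^sub>R Xp q = \<psi>2 q *\<^sub>R coord_vec (coords x1 x2 H) DIM('a) 1 q)
              \<and> (\<forall>p\<in>U. \<exists>V. open V \<and> p \<in> V \<and> V \<subseteq> U \<and>
                   (\<forall>q\<in>V. \<forall>q'\<in>V. x2 q = x2 q' \<and> (\<forall>k < DIM('a) - 2. H k q = H k q')
                      \<longrightarrow> \<psi>2 q = \<psi>2 q')))"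
proof -
  have Ck: "\<And>f k. smooth_on U f \<Longrightarrow> Ck_on k U f" by (simp add: smooth_on_def)
  have diff1: "\<And>f q. smooth_on U f \<Longrightarrow> q \<in> U \<Longrightarrow> f differentiable (at q)"
  proof -
    fix f :: "'a \<Rightarrow> 'b::real_normed_vector" and q
    assume "smooth_on U f" "q \<in> U"
    thus "f differentiable (at q)" using Ck[of f "Suc 0"] by simp
  qed
  have dE: "\<And>q. q \<in> U \<Longrightarrow> (E has_derivative Df E q) (at q)"
    using diff1[OF smooth_EFG(1)] frechet_derivative_works by blast
  have dx1: "\<And>q. q \<in> U \<Longrightarrow> (x1 has_derivative Df x1 q) (at q)"
    using diff1[OF smooth_roots(1)] frechet_derivative_works by blast
  have dx2: "\<And>q. q \<in> U \<Longrightarrow> (x2 has_derivative Df x2 q) (at q)"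
    using diff1[OF smooth_roots(2)] frechet_derivative_works by blast
  have vF: "F z = - (E z * (x1 z + x2 z))" if z: "z \<in> U" for z
  proof -
    have r1: "E z * (x1 z)\<^sup>2 + F z * x1 z + G z = 0" using root1 z by blast
    have r2: "E z * (x2 z)\<^sup>2 + F z * x2 z + G z = 0" using root2 z by blast
    have "(x1 z - x2 z) * (E z * (x1 z + x2 z) + F z) = (E z * (x1 z)\<^sup>2 + F z * x1 z + G z) - (E z * (x2 z)\<^sup>2 + F z * x2 z + G z)"
      by (simp add: algebra_simps power2_eq_square)
    hence "(x1 z - x2 z) * (E z * (x1 z + x2 z) + F z) = 0" using r1 r2 by simp
    thus ?thesis using distinct_roots z by simp
  qed
  have vG: "G z = E z * (x1 z * x2 z)" if z: "z \<in> U" for z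
  proof -
    have r1: "E z * (x1 z)\<^sup>2 + F z * x1 z + G z = 0" using root1 z by blast
    have "G z = - (E z * (x1 z)^2 + F z * x1 z)" using r1 by linarith
    thus ?thesis using vF[OF z] by (simp add: algebra_simps power2_eq_square)
  qed
  have XF: "vf_apply X F q = - (vf_apply X E q * (x1 q + x2 q) + E q * (vf_apply X x1 q + vf_apply X x2 q))"
    if q: "q \<in> U" for X q
  proof -
    have "((\<lambda>z. - (E z * (x1 z + x2 z))) has_derivative
        (\<lambda>w. - (E q * (Df x1 q w + Df x2 q w) + Df E q w * (x1 q + x2 q)))) (at q)"
      by (intro has_derivative_minus has_derivative_mult has_derivative_add dE dx1 dx2 q)
    hence "(F has_derivative (\<lambda>w. - (E q * (Df x1 q w + Df x2 q w) + Df E q w * (x1 q + x2 q)))) (at q)"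
      using has_derivative_transform_within_open[OF _ U_open q, of "\<lambda>z. - (E z * (x1 z + x2 z))" _ UNIV F] vF
      by auto
    hence "Df F q = (\<lambda>w. - (E q * (Df x1 q w + Df x2 q w) + Df E q w * (x1 q + x2 q)))"
      using frechet_derivative_at by metis
    thus ?thesis unfolding vf_apply_def by (simp add: algebra_simps)
  qed
  have XG: "vf_apply X G q = vf_apply X E q * (x1 q * x2 q) + E q * (vf_apply X x1 q * x2 q + x1 q * vf_apply X x2 q)"
    if q: "q \<in> U" for X q
  proof -
    have "((\<lambda>z. E z * (x1 z * x2 z)) has_derivative
        (\<lambda>w. E q * (x1 q * Df x2 q w + Df x1 q w * x2 q) + Df E q w * (x1 q * x2 q))) (at q)"
      by (intro has_derivative_mult dE dx1 dx2 q)
    hence "(G has_derivative (\<lambda>w. E q * (x1 q * Df x2 q w + Df x1 q w * x2 q) + Df E q w * (x1 q * x2 q))) (at q)"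
      using has_derivative_transform_within_open[OF _ U_open q, of "\<lambda>z. E z * (x1 z * x2 z)" _ UNIV G] vG
      by auto
    hence "Df G q = (\<lambda>w. E q * (x1 q * Df x2 q w + Df x1 q w * x2 q) + Df E q w * (x1 q * x2 q))"
      using frechet_derivative_at by metis
    thus ?thesis unfolding vf_apply_def by (simp add: algebra_simps)
  qed
  have ds: "vf_apply Xs x1 q = - x2 q * vf_apply Xp x1 q \<and> vf_apply Xs x2 q = - x1 q * vf_apply Xp x2 q"
    if q: "q \<in> U" for q
    by (rule kow_alg[OF _ _ vF[OF q] vG[OF q] XF[OF q] XF[OF q] XG[OF q] XG[OF q]])
       (use E_nonzero distinct_roots kow1 kow2 q in auto)
  have Xd: "\<forall>q\<in>U. Xp differentiable (at q) \<and> Xs differentiable (at q)"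
    using diff1 smooth_X by blast
  have comm: "\<forall>q\<in>U. Df Xs q (Xp q) - Df Xp q (Xs q) = 0"
    using commute unfolding commuting_on_def by blast
  have sy: "\<forall>j<DIM('a). smooth_on U (coords x1 x2 H j)"
    using smooth_H smooth_roots by (auto simp: coords_def)
  have integ0: "\<forall>j<DIM('a). j \<noteq> 0 \<longrightarrow> j \<noteq> 1 \<longrightarrow> (\<forall>q\<in>U. vf_apply Xp (coords x1 x2 H j) q = 0 \<and> vf_apply Xs (coords x1 x2 H j) q = 0)"
    using integrals by (auto simp: coords_def)
  interpret A: sep_setting U Xp Xs "coords x1 x2 H" x1 x2 0 1
    by unfold_locales (use U_open Xd independent_X comm sy dim integ0 coordinate_system ds distinct_roots in \<open>auto simp: coords_def\<close>)
  interpret B: sep_setting U Xp Xs "coords x1 x2 H" x2 x1 1 0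
    by unfold_locales (use U_open Xd independent_X comm sy dim integ0 coordinate_system ds distinct_roots in \<open>auto simp: coords_def\<close>)
  have c1: "\<forall>j<DIM('a). j \<noteq> 1 \<longrightarrow> coords x1 x2 H j q = coords x1 x2 H j q'"
    if "x1 q = x1 q' \<and> (\<forall>k < DIM('a) - 2. H k q = H k q')" for q q'
    using that by (auto simp: coords_def)
  have c2: "\<forall>j<DIM('a). j \<noteq> 0 \<longrightarrow> coords x1 x2 H j q = coords x1 x2 H j q'"
    if "x2 q = x2 q' \<and> (\<forall>k < DIM('a) - 2. H k q = H k q')" for q q'
    using that by (auto simp: coords_def)
  have PA: "(\<forall>q\<in>U. Xs q + x1 q *\<^sub>R Xp q = A.psi q *\<^sub>R coord_vec (coords x1 x2 H) DIM('a) 0 q)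
              \<and> (\<forall>p\<in>U. \<exists>V. open V \<and> p \<in> V \<and> V \<subseteq> U \<and>
                   (\<forall>q\<in>V. \<forall>q'\<in>V. x1 q = x1 q' \<and> (\<forall>k < DIM('a) - 2. H k q = H k q')
                      \<longrightarrow> A.psi q = A.psi q'))"
  proof
    show "\<forall>q\<in>U. Xs q + x1 q *\<^sub>R Xp q = A.psi q *\<^sub>R coord_vec (coords x1 x2 H) DIM('a) 0 q"
      using A.part1 by blast
    show "\<forall>p\<in>U. \<exists>V. open V \<and> p \<in> V \<and> V \<subseteq> U \<and>
                   (\<forall>q\<in>V. \<forall>q'\<in>V. x1 q = x1 q' \<and> (\<forall>k < DIM('a) - 2. H k q = H k q')
                      \<longrightarrow> A.psi q = A.psi q')"
      using A.part2 c1 by meson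
  qed
  have PB: "(\<forall>q\<in>U. Xs q + x2 q *\<^sub>R Xp q = B.psi q *\<^sub>R coord_vec (coords x1 x2 H) DIM('a) 1 q)
              \<and> (\<forall>p\<in>U. \<exists>V. open V \<and> p \<in> V \<and> V \<subseteq> U \<and>
                   (\<forall>q\<in>V. \<forall>q'\<in>V. x2 q = x2 q' \<and> (\<forall>k < DIM('a) - 2. H k q = H k q')
                      \<longrightarrow> B.psi q = B.psi q'))"
  proof
    show "\<forall>q\<in>U. Xs q + x2 q *\<^sub>R Xp q = B.psi q *\<^sub>R coord_vec (coords x1 x2 H) DIM('a) 1 q"
      using B.part1 by simp
    show "\<forall>p\<in>U. \<exists>V. open V \<and> p \<in> V \<and> V \<subseteq> U \<and>
                   (\<forall>q\<in>V. \<forall>q'\<in>V. x2 q = x2 q' \<and> (\<forall>k < DIM('a) - 2. H k q = H k q')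
                      \<longrightarrow> B.psi q = B.psi q')"
      using B.part2 c2 by meson
  qed
  show ?thesis
    apply (rule conjI)
     apply (rule exI[of _ A.psi], rule PA)
    apply (rule exI[of _ B.psi], rule PB)
    done
qed


end
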